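(* Let $G$ be a quasi-semi-simple group, $H$ a Hausdorff topological group, and $\phi:G\to H$ a continuous injective homomorphism. Then $\phi(G)$ is closed in $H$ and $\phi:G\to\phi(G)$ is a homeomorphism (with $\phi(G)$ carrying the subspace topology).
   Context: A locally compact group $G$ is quasi-semi-simple (qss) if there is a closed subgroup $A<G$ such that (i) $G=CAC$ for some compact $C\subset G$; (ii) for every net $(a_\alpha)$ in $A$ converging to infinity there is a subnet $(a_\beta)$ such that $U^{(a_\beta)}_+$ is not precompact and the subgroup generated by $U^{(a_\beta)}_+,U^{(a_\beta)}_-,U^{(a_\beta)}_0$ is dense in $G$, where for a net $(g_\alpha)$: $U^{(g_\alpha)}_+=\{x: g_\alpha^{-1}xg_\alpha\to e\}$, $U^{(g_\alpha)}_-=\{x: g_\alpha xg_\alpha^{-1}\to e\}$, and $U^{(g_\alpha)}_0$ is the set of $x$ such that every subnet of each of the nets $(g_\alpha^{-1}xg_\alpha)$, $(g_\alpha xg_\alpha^{-1})$ admits a converging subnet. *)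

theory Defs
  imports "HOL-Analysis.Analysis"
begin

text \<open>Groups are written additively (class group_add, not necessarily commutative):
  the product g x is written g + x, the inverse of g is - g, the identity is 0.
  Nets are represented, as usual in Isabelle/HOL, by proper filters on the group;
  a subnet of a net corresponds to a finer proper filter.\<close>

definition is_subgroup_add :: "'a::group_add set \<Rightarrow> bool" where
  "is_subgroup_add K \<longleftrightarrow> 0 \<in> K \<and> (\<forall>x\<in>K. \<forall>y\<in>K. x + y \<in> K) \<and> (\<forall>x\<in>K. - x \<in> K)"

definition generated_subgroup_add :: "'a::group_add set \<Rightarrow> 'a set" where
  "generated_subgroup_add X = \<Inter>{K. is_subgroup_add K \<and> X \<subseteq> K}"

definition U_plus :: "'a::topological_group_add filter \<Rightarrow> 'a set" where
  "U_plus F = {x. ((\<lambda>g. - g + x + g) \<longlongrightarrow> 0) F}"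

definition U_minus :: "'a::topological_group_add filter \<Rightarrow> 'a set" where
  "U_minus F = {x. ((\<lambda>g. g + x + - g) \<longlongrightarrow> 0) F}"

definition subnets_have_conv_subnets :: "('a \<Rightarrow> 'b::topological_space) \<Rightarrow> 'a filter \<Rightarrow> bool" where
  "subnets_have_conv_subnets f F \<longleftrightarrow>
     (\<forall>F1. F1 \<noteq> bot \<and> F1 \<le> F \<longrightarrow> (\<exists>F2 l. F2 \<noteq> bot \<and> F2 \<le> F1 \<and> (f \<longlongrightarrow> l) F2))"

definition U_zero :: "'a::topological_group_add filter \<Rightarrow> 'a set" where
  "U_zero F = {x. subnets_have_conv_subnets (\<lambda>g. - g + x + g) F
                 \<and> subnets_have_conv_subnets (\<lambda>g. g + x + - g) F}"

definition tends_to_infinity :: "'a::topological_space filter \<Rightarrow> bool" where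
  "tends_to_infinity F \<longleftrightarrow> (\<forall>K. compact K \<longrightarrow> eventually (\<lambda>g. g \<notin> K) F)"

definition quasi_semi_simple :: "'a::{topological_group_add, t2_space} itself \<Rightarrow> bool" where
  "quasi_semi_simple _ \<longleftrightarrow> locally compact (UNIV :: 'a set) \<and>
    (\<exists>A :: 'a set. closed A \<and> is_subgroup_add A \<and>
       (\<exists>C. compact C \<and> UNIV = {c1 + a + c2 | c1 a c2. c1 \<in> C \<and> a \<in> A \<and> c2 \<in> C}) \<and>
       (\<forall>F. F \<noteq> bot \<and> eventually (\<lambda>g. g \<in> A) F \<and> tends_to_infinity F \<longrightarrow>
          (\<exists>F'. F' \<noteq> bot \<and> F' \<le> F \<and> \<not> compact (closure (U_plus F')) \<and>
               closure (generated_subgroup_add (U_plus F' \<union> U_minus F' \<union> U_zero F')) = UNIV)))"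

end

theory Submission
  imports Defs
begin

lemma hom_basics:
  fixes \<phi> :: "'a::group_add \<Rightarrow> 'b::group_add"
  assumes hom: "\<And>x y. \<phi> (x + y) = \<phi> x + \<phi> y"
  shows "\<phi> 0 = 0" "\<phi> (- x) = - \<phi> x"
proof -
  have "\<phi> 0 = \<phi> 0 + \<phi> 0" using hom[of 0 0] by simp
  then show z: "\<phi> 0 = 0" by (metis add.right_neutral add_left_cancel)
  have "\<phi> x + \<phi> (- x) = 0" using hom[of x "-x"] z by simp
  then show "\<phi> (- x) = - \<phi> x" by (metis minus_unique)
qed

lemma comap_nonbot:
  assumes "inf (nhds l) (filtermap f F) \<noteq> bot"
  shows "inf F (filtercomap f (nhds l)) \<noteq> bot"
proof
  assume "inf F (filtercomap f (nhds l)) = bot"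
  then have "eventually (\<lambda>_. False) (inf F (filtercomap f (nhds l)))" by simp
  then obtain P Q where P: "eventually P F" and Q: "eventually Q (filtercomap f (nhds l))"
    and PQ: "\<And>x. P x \<Longrightarrow> Q x \<Longrightarrow> False"
    unfolding eventually_inf by blast
  from Q obtain R where R: "eventually R (nhds l)" and RQ: "\<And>x. R (f x) \<Longrightarrow> Q x"
    unfolding eventually_filtercomap by blast
  have "eventually (\<lambda>y. \<not> R y) (filtermap f F)"
    unfolding eventually_filtermap using P by (rule eventually_mono) (use PQ RQ in blast)
  with R have "eventually (\<lambda>_. False) (inf (nhds l) (filtermap f F))"
    unfolding eventually_inf by blast
  with assms show False by (simp add: eventually_False)
qed

lemma key:
  fixes \<phi> :: "'a::{topological_group_add, t2_space} \<Rightarrow> 'b::{topological_group_add, t2_space}"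
  assumes qss: "quasi_semi_simple TYPE('a)"
    and cont: "continuous_on UNIV \<phi>"
    and inj: "inj \<phi>"
    and hom: "\<And>x y. \<phi> (x + y) = \<phi> x + \<phi> y"
    and Fnb: "F \<noteq> bot" and lim: "(\<phi> \<longlongrightarrow> h) F"
  shows "\<exists>g. \<phi> g = h \<and> inf (nhds g) F \<noteq> bot"
proof (cases "\<exists>K. compact K \<and> \<not> eventually (\<lambda>g. g \<notin> K) F")
  case True
  then obtain K where K: "compact K" "\<not> eventually (\<lambda>g. g \<notin> K) F" by blast
  have F0: "inf F (principal K) \<noteq> bot"
  proof
    assume "inf F (principal K) = bot"
    then have "eventually (\<lambda>_. False) (inf F (principal K))" by simp
    then show False using K(2) unfolding eventually_inf_principal by simp
  qed
  have "eventually (\<lambda>x. x \<in> K) (inf F (principal K))"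
    unfolding eventually_inf_principal by simp
  with K(1) F0 obtain g where g: "g \<in> K" "inf (nhds g) (inf F (principal K)) \<noteq> bot"
    unfolding compact_filter by blast
  define G where "G = inf (nhds g) (inf F (principal K))"
  have GF: "G \<le> inf (nhds g) F" unfolding G_def by (simp add: le_infI2)
  have Gnb: "G \<noteq> bot" using g G_def by simp
  have "G \<le> F" using GF by (meson inf.boundedE order_trans)
  then have "(\<phi> \<longlongrightarrow> h) G" using lim by (rule tendsto_mono)
  moreover have "(\<phi> \<longlongrightarrow> \<phi> g) G"
  proof -
    have "G \<le> nhds g" using GF by (meson inf.boundedE order_trans)
    then have "((\<lambda>x. x) \<longlongrightarrow> g) G" unfolding filterlim_def by simp
    then show ?thesis using continuous_on_tendsto_compose[OF cont, of "\<lambda>x. x" g G] by simp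
  qed
  ultimately have "\<phi> g = h" using Gnb tendsto_unique by blast
  moreover have "inf (nhds g) F \<noteq> bot" using GF Gnb by (metis bot.extremum_uniqueI)
  ultimately show ?thesis by blast
next
  case False
  then have far: "\<And>K. compact K \<Longrightarrow> eventually (\<lambda>g. g \<notin> K) F" by blast
  from qss obtain A C where A: "is_subgroup_add A" and C: "compact C"
    and CAC: "(UNIV::'a set) = {c1 + a + c2 | c1 a c2. c1 \<in> C \<and> a \<in> A \<and> c2 \<in> C}"
    and Q: "\<And>F. F \<noteq> bot \<Longrightarrow> eventually (\<lambda>g. g \<in> A) F \<Longrightarrow> tends_to_infinity F \<Longrightarrow>
          (\<exists>F'. F' \<noteq> bot \<and> F' \<le> F \<and> \<not> compact (closure (U_plus F')) \<and>
               closure (generated_subgroup_add (U_plus F' \<union> U_minus F' \<union> U_zero F')) = UNIV)"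
    unfolding quasi_semi_simple_def by blast
  have "\<forall>g. \<exists>t. fst t \<in> C \<and> fst (snd t) \<in> A \<and> snd (snd t) \<in> C \<and> g = fst t + fst (snd t) + snd (snd t)"
  proof
    fix g :: 'a
    have "g \<in> {c1 + a + c2 | c1 a c2. c1 \<in> C \<and> a \<in> A \<and> c2 \<in> C}" using CAC by blast
    then obtain c1 a c2 where "c1 \<in> C" "a \<in> A" "c2 \<in> C" "g = c1 + a + c2" by blast
    then show "\<exists>t. fst t \<in> C \<and> fst (snd t) \<in> A \<and> snd (snd t) \<in> C \<and> g = fst t + fst (snd t) + snd (snd t)"
      by (intro exI[of _ "(c1, a, c2)"]) simp
  qed
  then have "\<exists>t. \<forall>g. fst (t g) \<in> C \<and> fst (snd (t g)) \<in> A \<and> snd (snd (t g)) \<in> C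
      \<and> g = fst (t g) + fst (snd (t g)) + snd (snd (t g))" by (rule choice)
  then obtain t where t: "\<forall>g. fst (t g) \<in> C \<and> fst (snd (t g)) \<in> A \<and> snd (snd (t g)) \<in> C
      \<and> g = fst (t g) + fst (snd (t g)) + snd (snd (t g))" by blast
  define c1 where "c1 g = fst (t g)" for g
  define a where "a g = fst (snd (t g))" for g
  define c2 where "c2 g = snd (snd (t g))" for g
  have dec: "c1 g \<in> C" "a g \<in> A" "c2 g \<in> C" "g = c1 g + a g + c2 g" for g
    using spec[OF t, of g] unfolding c1_def a_def c2_def by auto
  define f where "f g = (c1 g, c2 g)" for g
  have "compact (C \<times> C)" using C by (intro compact_Times)
  moreover have "filtermap f F \<noteq> bot" using Fnb by (simp add: filtermap_bot_iff)
  moreover have "eventually (\<lambda>x. x \<in> C \<times> C) (filtermap f F)"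
    unfolding eventually_filtermap f_def using dec by simp
  ultimately obtain pq where pq: "inf (nhds pq) (filtermap f F) \<noteq> bot"
    unfolding compact_filter by blast
  define F1 where "F1 = inf F (filtercomap f (nhds pq))"
  have F1nb: "F1 \<noteq> bot" unfolding F1_def by (rule comap_nonbot[OF pq])
  have F1F: "F1 \<le> F" unfolding F1_def by simp
  have fl: "(f \<longlongrightarrow> pq) F1" unfolding F1_def
    by (rule filterlim_mono[OF filterlim_filtercomap order.refl inf_le2])
  have l1: "(c1 \<longlongrightarrow> fst pq) F1" using tendsto_fst[OF fl] unfolding f_def by simp
  have l2: "(c2 \<longlongrightarrow> snd pq) F1" using tendsto_snd[OF fl] unfolding f_def by simp
  have cphi: "((\<lambda>x. \<phi> (u x)) \<longlongrightarrow> \<phi> l) G" if "(u \<longlongrightarrow> l) G" for u l and G :: "'x filter"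
    using continuous_on_tendsto_compose[OF cont that] by simp
  define k where "k = - \<phi> (fst pq) + h + - \<phi> (snd pq)"
  have phia: "\<phi> (a g) = - \<phi> (c1 g) + \<phi> g + - \<phi> (c2 g)" for g
  proof -
    have "a g = - c1 g + (c1 g + a g + c2 g) + - c2 g" by (simp add: add.assoc)
    then have "a g = - c1 g + g + - c2 g" by (simp only: dec(4)[of g, symmetric])
    then show ?thesis by (simp only: hom hom_basics[OF hom])
  qed
  have "((\<lambda>g. - \<phi> (c1 g) + \<phi> g + - \<phi> (c2 g)) \<longlongrightarrow> k) F1" unfolding k_def
    by (intro tendsto_add tendsto_minus cphi l1 l2 tendsto_mono[OF F1F lim])
  then have la: "((\<lambda>g. \<phi> (a g)) \<longlongrightarrow> k) F1" by (simp add: phia)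
  define Fa where "Fa = filtermap a F1"
  have Fanb: "Fa \<noteq> bot" using F1nb by (simp add: Fa_def filtermap_bot_iff)
  have FaA: "eventually (\<lambda>g. g \<in> A) Fa" unfolding Fa_def eventually_filtermap using dec by simp
  have Fainf: "tends_to_infinity Fa" unfolding tends_to_infinity_def
  proof (intro allI impI)
    fix K :: "'a set" assume K: "compact K"
    define S where "S = (\<lambda>(x, y, z). x + y + z) ` (C \<times> K \<times> C)"
    have "compact S" unfolding S_def
      by (intro compact_continuous_image compact_Times C K)
         (auto intro!: continuous_intros simp: split_beta)
    then have "eventually (\<lambda>g. g \<notin> S) F" by (rule far)
    then have "eventually (\<lambda>g. g \<notin> S) F1" by (rule filter_leD[OF F1F])
    then show "eventually (\<lambda>g. g \<notin> K) Fa" unfolding Fa_def eventually_filtermap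
    proof (rule eventually_mono)
      fix g assume "g \<notin> S"
      show "a g \<notin> K"
      proof
        assume "a g \<in> K"
        then have "(c1 g, a g, c2 g) \<in> C \<times> K \<times> C" using dec(1,3)[of g] by simp
        then have "c1 g + a g + c2 g \<in> S" unfolding S_def by (metis (no_types, lifting) case_prod_conv image_eqI)
        then show False using \<open>g \<notin> S\<close> by (simp only: dec(4)[of g, symmetric])
      qed
    qed
  qed
  obtain F' where F': "F' \<noteq> bot" "F' \<le> Fa" "\<not> compact (closure (U_plus F'))"
    using Q[OF Fanb FaA Fainf] by blast
  have "(\<phi> \<longlongrightarrow> k) Fa" unfolding Fa_def filterlim_filtermap by (rule la)
  then have limk: "(\<phi> \<longlongrightarrow> k) F'" by (rule tendsto_mono[OF F'(2)])
  have "U_plus F' \<subseteq> {0}"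
  proof
    fix x assume "x \<in> U_plus F'"
    then have "((\<lambda>g. - g + x + g) \<longlongrightarrow> 0) F'" unfolding U_plus_def by simp
    then have "((\<lambda>g. \<phi> (- g + x + g)) \<longlongrightarrow> \<phi> 0) F'" by (rule cphi)
    then have "((\<lambda>g. \<phi> (- g + x + g)) \<longlongrightarrow> 0) F'" by (simp only: hom_basics(1)[OF hom])
    then have "((\<lambda>g. \<phi> g + \<phi> (- g + x + g) + - \<phi> g) \<longlongrightarrow> k + 0 + - k) F'"
      by (intro tendsto_add tendsto_minus limk)
    moreover have "\<phi> g + \<phi> (- g + x + g) + - \<phi> g = \<phi> x" for g
    proof -
      have "\<phi> x = \<phi> (g + (- g + x + g) + - g)" by (simp add: add.assoc)
      then show ?thesis by (simp only: hom hom_basics[OF hom])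
    qed
    ultimately have "((\<lambda>g. \<phi> x) \<longlongrightarrow> 0) F'" by simp
    then have "\<phi> x = 0" using tendsto_unique[OF F'(1) tendsto_const] by blast
    then have "\<phi> x = \<phi> 0" using hom_basics[OF hom] by simp
    then show "x \<in> {0}" using inj by (simp add: inj_eq)
  qed
  then have "closure (U_plus F') \<subseteq> {0}" by (simp add: closure_minimal)
  then have "finite (closure (U_plus F'))" by (rule finite_subset) simp
  then have "compact (closure (U_plus F'))" by (rule finite_imp_compact)
  with F'(3) have False by simp
  then show ?thesis by simp
qed

lemma closure_inf_nonbot:
  "a \<in> closure A \<longleftrightarrow> inf (nhds a) (principal A) \<noteq> bot"
proof -
  have "inf (nhds a) (principal A) = bot \<longleftrightarrow> eventually (\<lambda>x. x \<notin> A) (nhds a)"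
    unfolding eventually_False[symmetric] eventually_inf_principal by simp
  also have "\<dots> \<longleftrightarrow> a \<notin> closure A"
    unfolding eventually_nhds closure_iff_nhds_not_empty by blast
  finally show ?thesis by blast
qed

theorem theorem5p1:
  fixes \<phi> :: "'a::{topological_group_add, t2_space} \<Rightarrow> 'b::{topological_group_add, t2_space}"
  assumes "quasi_semi_simple TYPE('a)"
    and "continuous_on UNIV \<phi>"
    and "inj \<phi>"
    and "\<And>x y. \<phi> (x + y) = \<phi> x + \<phi> y"
  shows "closed (range \<phi>) \<and> (\<exists>\<psi>. homeomorphism UNIV (range \<phi>) \<phi> \<psi>)"
proof -
  have cl: "closed (\<phi> ` S)" if S: "closed S" for S
  proof -
    have "closure (\<phi> ` S) \<subseteq> \<phi> ` S"
    proof
      fix h assume "h \<in> closure (\<phi> ` S)"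
      then have "inf (nhds h) (principal (\<phi> ` S)) \<noteq> bot"
        by (simp add: closure_inf_nonbot)
      then have "inf (nhds h) (filtermap \<phi> (principal S)) \<noteq> bot"
        by simp
      then have nb: "inf (principal S) (filtercomap \<phi> (nhds h)) \<noteq> bot" by (rule comap_nonbot)
      have "(\<phi> \<longlongrightarrow> h) (inf (principal S) (filtercomap \<phi> (nhds h)))"
        by (meson filterlim_filtercomap filterlim_mono inf_le2 order.refl)
      from key[OF assms nb this] obtain g where g: "\<phi> g = h"
        "inf (nhds g) (inf (principal S) (filtercomap \<phi> (nhds h))) \<noteq> bot" by blast
      have le: "inf (nhds g) (inf (principal S) (filtercomap \<phi> (nhds h))) \<le> inf (nhds g) (principal S)"
        by (meson inf_mono order.refl inf_le1)
      have "inf (nhds g) (principal S) \<noteq> bot"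
        using g(2) le by (metis bot.extremum_uniqueI)
      then have "g \<in> S" using closure_inf_nonbot[of g S] S by simp
      then show "h \<in> \<phi> ` S" using g(1) by blast
    qed
    then show ?thesis by (simp add: closure_subset_eq)
  qed
  have "closed (range \<phi>)" using cl[of UNIV] by simp
  moreover obtain \<psi> where "homeomorphism UNIV (range \<phi>) \<phi> \<psi>"
  proof (rule homeomorphism_injective_closed_map[OF assms(2) refl])
    show "inj_on \<phi> UNIV" using assms(3) by simp
    fix U :: "'a set" assume "closedin (top_of_set UNIV) U"
    then have "closed U" by (simp add: closedin_closed)
    then show "closedin (top_of_set (range \<phi>)) (\<phi> ` U)" by (intro closed_subset cl) auto
  qed
  ultimately show ?thesis by blast
qed

end
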